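(* Let $\Omega\subset\mathbb R^d$ be compact and let $m\ge2$ be an integer. Then the set of restrictions to $\Omega$ of the maps $$\mathbf x\mapsto\mathbf W^T\boldsymbol\sigma(\mathbf W\mathbf x),\qquad p\in\mathbb N,\ \mathbf W\in\mathbb R^{p\times d},\ \sigma_i\in\mathcal{LS}^m_{\uparrow}(\mathbb R),$$ is dense in $\mathcal E(\Omega)$ with respect to the norm $\|\mathbf f\|_{C(\Omega)}=\sup_{\mathbf x\in\Omega}\|\mathbf f(\mathbf x)\|$.
   Context: $\boldsymbol\sigma$ acts componentwise: $(\boldsymbol\sigma(\mathbf z))_i=\sigma_i(z_i)$. $\mathcal{LS}^m_{\uparrow}(\mathbb R)$ is the set of increasing continuous piecewise-linear functions (linear splines) $\mathbb R\to\mathbb R$ with at most $m$ knots. $C^{0,1}_{\uparrow}(\mathbb R)$ denotes the set of Lipschitz-continuous increasing functions $\mathbb R\to\mathbb R$. $\mathcal E(\mathbb R^d)$ is the set of maps $\mathbf x\mapsto\mathbf W^T\boldsymbol\sigma(\mathbf W\mathbf x)$ with $p\in\mathbb N$, $\mathbf W\in\mathbb R^{p\times d}$ and each $\sigma_i\in C^{0,1}_{\uparrow}(\mathbb R)$; $\mathcal E(\Omega)$ is the set of restrictions to $\Omega$ of elements of $\mathcal E(\mathbb R^d)$. *)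

theory Defs
  imports "HOL-Analysis.Analysis"
begin

definition lip_incr :: "(real \<Rightarrow> real) \<Rightarrow> bool" where
  "lip_incr s \<longleftrightarrow> mono s \<and> (\<exists>C. C-lipschitz_on UNIV s)"

text \<open>Increasing continuous piecewise-linear functions with at most m knots:
  there is a finite knot set K, card K \<le> m, such that s is affine on every
  open interval not meeting K.\<close>
definition lin_spline_incr :: "nat \<Rightarrow> (real \<Rightarrow> real) \<Rightarrow> bool" where
  "lin_spline_incr m s \<longleftrightarrow> mono s \<and> continuous_on UNIV s \<and>
     (\<exists>K. finite K \<and> card K \<le> m \<and>
        (\<forall>a b. {a<..<b} \<inter> K = {} \<longrightarrow>
            (\<exists>c0 c1. \<forall>x\<in>{a<..<b}. s x = c0 + c1 * x)))"

text \<open>Maps x |-> W^T sigma(W x) with W in R^(p x d) given by its rows w 0..w (p-1)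
  (so W^T sigma(W x) = sum_i sigma_i(w_i . x) w_i), each sigma_i satisfying P.\<close>
definition expansive_maps :: "((real \<Rightarrow> real) \<Rightarrow> bool) \<Rightarrow> (real^'d::finite \<Rightarrow> real^'d) set" where
  "expansive_maps P = {(\<lambda>x. \<Sum>i<p. \<sigma> i (w i \<bullet> x) *\<^sub>R w i) | (p::nat) w \<sigma>.
       (\<forall>i<p. P (\<sigma> i))}"

end

theory Submission
  imports Defs
begin

lemma clamp_spline:
  assumes "u < v" "c \<ge> 0"
  shows "lin_spline_incr 2 (\<lambda>t. c * (min (max t u) v - u))"
  unfolding lin_spline_incr_def
proof (intro conjI)
  show "mono (\<lambda>t. c * (min (max t u) v - u))"
    using assms by (auto simp: mono_def intro!: mult_left_mono)
  show "continuous_on UNIV (\<lambda>t. c * (min (max t u) v - u))"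
    by (intro continuous_intros)
  show "\<exists>K. finite K \<and> card K \<le> 2 \<and>
        (\<forall>a b. {a<..<b} \<inter> K = {} \<longrightarrow>
            (\<exists>c0 c1. \<forall>x\<in>{a<..<b}. c * (min (max x u) v - u) = c0 + c1 * x))"
  proof (intro exI[of _ "{u,v}"] conjI allI impI)
    show "finite {u,v}" by simp
    show "card {u,v} \<le> 2" by (simp add: card_insert_le_m1)
    fix a b assume d: "{a<..<b} \<inter> {u,v} = {}"
    show "\<exists>c0 c1. \<forall>x\<in>{a<..<b}. c * (min (max x u) v - u) = c0 + c1 * x"
    proof (cases "a < b")
      case False then show ?thesis by auto
    next
      case True
      have hu: "u \<le> a \<or> b \<le> u" using d by auto
      have hv: "v \<le> a \<or> b \<le> v" using d by auto
      show ?thesis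
      proof (cases "b \<le> u")
        case True
        then show ?thesis using assms by (intro exI[of _ 0]) auto
      next
        case False
        with hu have ua: "u \<le> a" by auto
        show ?thesis
        proof (cases "v \<le> a")
          case True
          then show ?thesis using assms by (intro exI[of _ "c*(v-u)"] exI[of _ 0]) auto
        next
          case False
          with hv have "b \<le> v" by auto
          then show ?thesis using ua
            by (intro exI[of _ "-c*u"] exI[of _ c]) (auto simp: algebra_simps)
        qed
      qed
    qed
  qed
qed

lemma spline_mono_m:
  assumes "lin_spline_incr 2 s" "m \<ge> 2"
  shows "lin_spline_incr m s"
  using assms unfolding lin_spline_incr_def by (meson order_trans)

lemma const_spline: "lin_spline_incr m (\<lambda>_. c)"
proof -
  have "\<exists>c0 c1. \<forall>x\<in>{a<..<b}. c = c0 + c1 * x" for a b :: real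
    by (intro exI[of _ c] exI[of _ 0]) simp
  then show ?thesis unfolding lin_spline_incr_def
    by (auto simp: mono_def intro!: exI[of _ "{}"])
qed

definition spl_sums :: "nat \<Rightarrow> (real \<Rightarrow> real) set" where
  "spl_sums m = {(\<lambda>t. \<Sum>j<n. \<tau> j t) | (n::nat) \<tau>. \<forall>j<n. lin_spline_incr m (\<tau> j)}"

lemma spl_sums_add:
  assumes "g \<in> spl_sums m" "lin_spline_incr m h"
  shows "(\<lambda>t. g t + h t) \<in> spl_sums m"
proof -
  obtain n :: nat and \<tau> where g: "g = (\<lambda>t. \<Sum>j<n. \<tau> j t)" and t: "\<forall>j<n. lin_spline_incr m (\<tau> j)"
    using assms(1) unfolding spl_sums_def by blast
  have "(\<lambda>t. g t + h t) = (\<lambda>t. \<Sum>j<Suc n. (\<tau>(n:=h)) j t)"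
    by (simp add: g)
  moreover have "\<forall>j<Suc n. lin_spline_incr m ((\<tau>(n:=h)) j)"
    using t assms(2) by (auto simp: less_Suc_eq)
  ultimately show ?thesis unfolding spl_sums_def by blast
qed

lemma spl_sums_const: "(\<lambda>_. c) \<in> spl_sums m"
proof -
  show ?thesis unfolding spl_sums_def
    by (intro CollectI exI[of _ "1::nat"] exI[of _ "\<lambda>_ _. c"]) (simp add: const_spline)
qed

lemma exp_zero: "(\<lambda>x. 0) \<in> expansive_maps P"
proof -
  show ?thesis unfolding expansive_maps_def
    by (intro CollectI exI[of _ "0::nat"] exI[of _ "\<lambda>_. 0"] exI[of _ "\<lambda>_ _. 0"]) simp
qed

lemma exp_add1:
  assumes "F \<in> expansive_maps P" "P s"
  shows "(\<lambda>x. F x + s (w \<bullet> x) *\<^sub>R w) \<in> expansive_maps P"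
proof -
  obtain p :: nat and v \<sigma> where F: "F = (\<lambda>x. \<Sum>i<p. \<sigma> i (v i \<bullet> x) *\<^sub>R v i)" and t: "\<forall>i<p. P (\<sigma> i)"
    using assms(1) unfolding expansive_maps_def by blast
  have "(\<lambda>x. F x + s (w \<bullet> x) *\<^sub>R w) = (\<lambda>x. \<Sum>i<Suc p. (\<sigma>(p:=s)) i ((v(p:=w)) i \<bullet> x) *\<^sub>R (v(p:=w)) i)"
    by (simp add: F)
  moreover have "\<forall>i<Suc p. P ((\<sigma>(p:=s)) i)"
    using t assms(2) by (auto simp: less_Suc_eq)
  ultimately show ?thesis unfolding expansive_maps_def by blast
qed

lemma exp_add_spl:
  assumes "F \<in> expansive_maps (lin_spline_incr m)" "g \<in> spl_sums m"
  shows "(\<lambda>x. F x + g (w \<bullet> x) *\<^sub>R w) \<in> expansive_maps (lin_spline_incr m)"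
proof -
  obtain n :: nat and \<tau> where g: "g = (\<lambda>t. \<Sum>j<n. \<tau> j t)" and t: "\<forall>j<n. lin_spline_incr m (\<tau> j)"
    using assms(2) unfolding spl_sums_def by blast
  have "\<forall>j\<le>n. (\<lambda>x. F x + (\<Sum>i<j. \<tau> i (w \<bullet> x)) *\<^sub>R w) \<in> expansive_maps (lin_spline_incr m)"
  proof (intro allI impI)
    fix j assume "j \<le> n" then show "(\<lambda>x. F x + (\<Sum>i<j. \<tau> i (w \<bullet> x)) *\<^sub>R w) \<in> expansive_maps (lin_spline_incr m)"
    proof (induction j)
      case 0 then show ?case using assms(1) by simp
    next
      case (Suc j)
      then have "(\<lambda>x. F x + (\<Sum>i<j. \<tau> i (w \<bullet> x)) *\<^sub>R w) \<in> expansive_maps (lin_spline_incr m)"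
        by simp
      from exp_add1[OF this, of "\<tau> j" w] t Suc.prems
      have "(\<lambda>x. (F x + (\<Sum>i<j. \<tau> i (w \<bullet> x)) *\<^sub>R w) + \<tau> j (w \<bullet> x) *\<^sub>R w) \<in> expansive_maps (lin_spline_incr m)"
        by simp
      then show ?case by (simp add: scaleR_add_left add.assoc)
    qed
  qed
  then show ?thesis using g by simp
qed

lemma approx1d:
  assumes "lip_incr \<sigma>" "\<delta> > 0" "m \<ge> 2"
  shows "\<exists>g \<in> spl_sums m. \<forall>t\<in>{a..b}. \<bar>\<sigma> t - g t\<bar> \<le> \<delta>"
proof -
  obtain C where C: "C-lipschitz_on UNIV \<sigma>" and mo: "mono \<sigma>"
    using assms(1) unfolding lip_incr_def by blast
  define h where "h = \<delta>/(\<bar>C\<bar>+1)"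
  have hpos: "h > 0" using assms(2) by (simp add: h_def)
  have osc: "\<bar>\<sigma> s - \<sigma> t\<bar> < \<delta>" if "\<bar>s - t\<bar> \<le> h" for s t
  proof -
    have "\<bar>\<sigma> s - \<sigma> t\<bar> \<le> C * \<bar>s - t\<bar>"
      using lipschitz_onD[OF C, of s t] by (simp add: dist_real_def)
    also have "\<dots> \<le> \<bar>C\<bar> * h" using that
      by (metis abs_ge_self abs_ge_zero mult_mono order_trans)
    also have "\<dots> < \<delta>" using assms(2) unfolding h_def
      by (simp add: field_simps)
    finally show ?thesis .
  qed
  have inv: "\<exists>g\<in>spl_sums m. (\<forall>t\<in>{a..a+real k*h}. \<bar>\<sigma> t - g t\<bar> \<le> \<delta>) \<and>
      (\<forall>t\<ge>a+real k*h. g t = \<sigma> (a+real k*h))" for k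
  proof (induction k)
    case 0
    show ?case using spl_sums_const[of "\<sigma> a" m] assms(2) by (intro bexI[of _ "\<lambda>_. \<sigma> a"]) auto
  next
    case (Suc k)
    then obtain g where g: "g \<in> spl_sums m" and g1: "\<forall>t\<in>{a..a+real k*h}. \<bar>\<sigma> t - g t\<bar> \<le> \<delta>"
      and g2: "\<forall>t\<ge>a+real k*h. g t = \<sigma> (a+real k*h)" by blast
    define u where "u = a + real k * h"
    define v where "v = a + real (Suc k) * h"
    have vu: "v = u + h" by (simp add: u_def v_def algebra_simps)
    define c where "c = (\<sigma> v - \<sigma> u)/h"
    have su: "\<sigma> u \<le> \<sigma> v" using mo vu hpos by (simp add: mono_def)
    have c0: "c \<ge> 0" using su hpos by (simp add: c_def)
    have ch: "c * h = \<sigma> v - \<sigma> u" using hpos by (simp add: c_def)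
    have sp: "lin_spline_incr m (\<lambda>t. c * (min (max t u) v - u))"
      using clamp_spline[of u v c] c0 vu hpos assms(3) spline_mono_m by auto
    define g' where "g' = (\<lambda>t. g t + c * (min (max t u) v - u))"
    have g'S: "g' \<in> spl_sums m" unfolding g'_def by (rule spl_sums_add[OF g sp])
    have A: "\<bar>\<sigma> t - g' t\<bar> \<le> \<delta>" if t: "t \<in> {a..v}" for t
    proof (cases "t \<le> u")
      case True
      have "min (max t u) v = u" using True vu hpos by simp
      then show ?thesis using g1 t True by (simp add: g'_def u_def)
    next
      case False
      then have tu: "u \<le> t" "t \<le> v" using t by auto
      have gt: "g' t = \<sigma> u + c * (t - u)" using g2 tu by (simp add: g'_def u_def)
      have "c * (t - u) \<le> c * h" using c0 tu vu by (intro mult_left_mono) auto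
      moreover have "0 \<le> c * (t - u)" using c0 tu by simp
      moreover have "\<sigma> u \<le> \<sigma> t" "\<sigma> t \<le> \<sigma> v" using mo tu by (auto simp: mono_def)
      moreover have "\<sigma> v - \<sigma> u < \<delta>" using osc[of v u] vu hpos by simp
      ultimately show ?thesis using gt ch by linarith
    qed
    have B: "g' t = \<sigma> v" if "t \<ge> v" for t
      using that g2 vu hpos ch by (simp add: g'_def u_def)
    show ?case using g'S A B unfolding v_def by blast
  qed
  obtain k :: nat where k: "(b - a)/h < k" using reals_Archimedean2 by blast
  then have "b \<le> a + real k * h" using hpos by (simp add: field_simps)
  then show ?thesis using inv[of k] by force
qed

theorem proposition4:
  fixes \<Omega> :: "(real^'d) set" and m :: nat and f :: "real^'d \<Rightarrow> real^'d"
  assumes "compact \<Omega>" and "m \<ge> 2" and "f \<in> expansive_maps lip_incr"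
  shows "\<forall>\<epsilon>>0. \<exists>g \<in> expansive_maps (lin_spline_incr m).
           (\<forall>x\<in>\<Omega>. norm (f x - g x) < \<epsilon>)"
proof (intro allI impI)
  fix \<epsilon> :: real assume ep: "\<epsilon> > 0"
  have "\<exists>(p::nat) w \<sigma>. f = (\<lambda>x. \<Sum>i<p. \<sigma> i (w i \<bullet> x) *\<^sub>R w i) \<and> (\<forall>i<p. lip_incr (\<sigma> i))"
    using assms(3) unfolding expansive_maps_def by simp
  then obtain p :: nat and w \<sigma> where f: "f = (\<lambda>x. \<Sum>i<p. \<sigma> i (w i \<bullet> x) *\<^sub>R w i)" and sl: "\<forall>i<p. lip_incr (\<sigma> i)"
    by blast
  obtain B where B: "\<forall>x\<in>\<Omega>. norm x \<le> B"
    using compact_imp_bounded[OF assms(1)] unfolding bounded_iff by blast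
  define R where "R i = norm (w i) * \<bar>B\<bar>" for i
  define \<delta> where "\<delta> i = \<epsilon>/((real p+1)*(norm (w i)+1))" for i
  have "\<forall>i. \<exists>g. i < p \<longrightarrow> g \<in> spl_sums m \<and> (\<forall>t\<in>{-R i..R i}. \<bar>\<sigma> i t - g t\<bar> \<le> \<delta> i)"
  proof
    fix i
    show "\<exists>g. i < p \<longrightarrow> g \<in> spl_sums m \<and> (\<forall>t\<in>{-R i..R i}. \<bar>\<sigma> i t - g t\<bar> \<le> \<delta> i)"
    proof (cases "i < p")
      case True
      have "\<delta> i > 0" unfolding \<delta>_def using ep by (intro divide_pos_pos mult_pos_pos) (auto simp: add_nonneg_pos)
      then show ?thesis using approx1d[OF sl[rule_format, OF True] _ assms(2)] by blast
    qed auto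
  qed
  then obtain G where G: "\<And>i. i < p \<Longrightarrow> G i \<in> spl_sums m \<and> (\<forall>t\<in>{-R i..R i}. \<bar>\<sigma> i t - G i t\<bar> \<le> \<delta> i)"
    by metis
  define g where "g = (\<lambda>x. \<Sum>i<p. G i (w i \<bullet> x) *\<^sub>R w i)"
  have gE: "\<forall>j\<le>p. (\<lambda>x. \<Sum>i<j. G i (w i \<bullet> x) *\<^sub>R w i) \<in> expansive_maps (lin_spline_incr m)"
  proof (intro allI impI)
    fix j assume "j \<le> p"
    then show "(\<lambda>x. \<Sum>i<j. G i (w i \<bullet> x) *\<^sub>R w i) \<in> expansive_maps (lin_spline_incr m)"
    proof (induction j)
      case 0 then show ?case using exp_zero by simp
    next
      case (Suc j)
      then show ?case using exp_add_spl[of _ m "G j" "w j"] G[of j] by simp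
    qed
  qed
  show "\<exists>g \<in> expansive_maps (lin_spline_incr m). (\<forall>x\<in>\<Omega>. norm (f x - g x) < \<epsilon>)"
  proof (intro bexI[of _ g] ballI)
    show "g \<in> expansive_maps (lin_spline_incr m)" using gE g_def by simp
    fix x assume x: "x \<in> \<Omega>"
    have trm: "norm ((\<sigma> i (w i \<bullet> x) - G i (w i \<bullet> x)) *\<^sub>R w i) \<le> \<epsilon>/(real p+1)" if i: "i < p" for i
    proof -
      have "\<bar>w i \<bullet> x\<bar> \<le> norm (w i) * norm x" by (rule Cauchy_Schwarz_ineq2)
      also have "\<dots> \<le> R i" unfolding R_def using B x
        by (intro mult_left_mono) auto
      finally have "w i \<bullet> x \<in> {-R i..R i}" by auto
      then have e: "\<bar>\<sigma> i (w i \<bullet> x) - G i (w i \<bullet> x)\<bar> \<le> \<delta> i" using G[OF i] by blast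
      have "norm ((\<sigma> i (w i \<bullet> x) - G i (w i \<bullet> x)) *\<^sub>R w i) = \<bar>\<sigma> i (w i \<bullet> x) - G i (w i \<bullet> x)\<bar> * norm (w i)"
        by simp
      also have "\<dots> \<le> \<delta> i * norm (w i)" using e by (intro mult_right_mono) auto
      also have "\<dots> = \<epsilon>/(real p+1) * (norm (w i)/(norm (w i)+1))"
        unfolding \<delta>_def by simp
      also have "\<dots> \<le> \<epsilon>/(real p+1) * 1"
        using ep by (intro mult_left_mono) (auto simp: divide_le_eq_1 add_nonneg_pos)
      also have "\<dots> = \<epsilon>/(real p+1)" by simp
      finally show ?thesis .
    qed
    have "f x - g x = (\<Sum>i<p. (\<sigma> i (w i \<bullet> x) - G i (w i \<bullet> x)) *\<^sub>R w i)"
      by (simp add: f g_def sum_subtractf scaleR_diff_left)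
    then have "norm (f x - g x) \<le> (\<Sum>i<p. norm ((\<sigma> i (w i \<bullet> x) - G i (w i \<bullet> x)) *\<^sub>R w i))"
      by (metis norm_sum)
    also have "\<dots> \<le> (\<Sum>i<p. \<epsilon>/(real p+1))" by (intro sum_mono trm) simp
    also have "\<dots> = real p * \<epsilon>/(real p+1)" by simp
    also have "\<dots> < \<epsilon>" using ep by (simp add: field_simps)
    finally show "norm (f x - g x) < \<epsilon>" .
  qed
qed

end
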